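(* Let $N\ge 4$ be an integer. Suppose $w\in C^2([0,\infty))$ satisfies $$-w''(t)+(N-2)w'(t)+(N-1)w(t)=\frac{N-1}{2}\,e^{-t}\,w(t)^2\qquad\text{for all }t\ge 0,$$ together with $w'(0)-(N-1)w(0)=0$ and $\lim_{t\to+\infty}w(t)=0$. Then $w\equiv 0$.
   Context: This is the radial Navier problem (after the substitutions $v=u'$, $w(t)=-v(e^{-t})$) for $\Delta^2u=S_2[u]$ in the unit ball of $\mathbb{R}^N$ with $u=\Delta u=0$ on the boundary, where $S_2[u]$ is the sum of the $2\times2$ principal minors of the Hessian matrix of $u$; this is the case $k=2$, $\lambda=0$. *)

theory Defs
  imports "HOL-Analysis.Analysis"
begin

end

theory Submission
  imports Defs
begin

lemma antimono_deriv:
  fixes f f' :: "real \<Rightarrow> real"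
  assumes d: "\<And>x. x \<ge> 0 \<Longrightarrow> (f has_real_derivative f' x) (at x within {0..})"
  and n: "\<And>x. x \<ge> 0 \<Longrightarrow> f' x \<le> 0" and "0 \<le> s" "s \<le> t"
  shows "f t \<le> f s"
proof -
  have "\<And>x. s \<le> x \<Longrightarrow> x \<le> t \<Longrightarrow> (f has_derivative (\<lambda>h. f' x * h)) (at x within {s..t})"
  proof -
    fix x assume "s \<le> x" "x \<le> t"
    then have "(f has_real_derivative f' x) (at x within {s..t})"
      using has_field_derivative_subset[OF d] \<open>0 \<le> s\<close> by auto
    then show "(f has_derivative (\<lambda>h. f' x * h)) (at x within {s..t})"
      by (simp add: has_field_derivative_def)
  qed
  from mvt_very_simple[OF \<open>s \<le> t\<close> this] obtain x where x: "x \<in> {s..t}" "f t - f s = f' x * (t - s)"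
    by blast
  have "f' x * (t - s) \<le> 0" using n[of x] x(1) \<open>0 \<le> s\<close> \<open>s \<le> t\<close>
    by (simp add: mult_nonpos_nonneg)
  then show ?thesis using x by linarith
qed

lemma exp_neg_lim: "((\<lambda>t::real. exp (-t)) \<longlongrightarrow> 0) at_top"
  using filterlim_compose[OF exp_at_bot filterlim_uminus_at_bot_at_top] by simp

theorem theorem3p4:
  fixes N :: nat and w w' w'' :: "real \<Rightarrow> real"
  assumes hN: "N \<ge> 4"
    and hw': "\<And>t. t \<ge> 0 \<Longrightarrow> (w has_real_derivative w' t) (at t within {0..})"
    and hw'': "\<And>t. t \<ge> 0 \<Longrightarrow> (w' has_real_derivative w'' t) (at t within {0..})"
    and hcont: "continuous_on {0..} w''"
    and heq: "\<And>t. t \<ge> 0 \<Longrightarrow>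
       - w'' t + (real N - 2) * w' t + (real N - 1) * w t = (real N - 1) / 2 * exp (- t) * (w t)\<^sup>2"
    and hbc: "w' 0 - (real N - 1) * w 0 = 0"
    and hlim: "(w \<longlongrightarrow> 0) at_top"
  shows "\<forall>t\<ge>0. w t = 0"
proof -
  define n where "n = real N"
  define c where "c = (n - 1) / 2"
  define k where "k = n - 4"
  have n4: "n \<ge> 4" using hN by (simp add: n_def)
  have cpos: "c > 0" using n4 by (simp add: c_def)
  have k0: "k \<ge> 0" using n4 by (simp add: k_def)
  have heq': "\<And>t. t \<ge> 0 \<Longrightarrow> w'' t = (n - 2) * w' t + (n - 1) * w t - c * exp (- t) * (w t)\<^sup>2"
    unfolding n_def c_def using heq by smt
  define y where "y t = (n - 1) * w t - w' t" for t
  define P where "P t = exp t * y t" for t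
  have dP: "(P has_real_derivative c * (w t)\<^sup>2) (at t within {0..})" if "t \<ge> 0" for t
  proof -
    have "(P has_real_derivative exp t * ((n - 1) * w t - w' t) + exp t * ((n - 1) * w' t - w'' t)) (at t within {0..})"
      unfolding P_def y_def
      by (auto intro!: derivative_eq_intros hw' hw'' that)
    moreover have "exp t * ((n - 1) * w t - w' t) + exp t * ((n - 1) * w' t - w'' t) = c * (w t)\<^sup>2"
      using heq'[OF that] by (simp add: algebra_simps exp_minus field_simps)
    ultimately show ?thesis by simp
  qed
  have P0: "P 0 = 0" using hbc by (simp add: P_def y_def n_def)
  have Pnn: "P t \<ge> 0" if "t \<ge> 0" for t
  proof -
    have "(\<lambda>x. - P x) t \<le> (\<lambda>x. - P x) 0"
      by (rule antimono_deriv[where f = "\<lambda>x. - P x" and f' = "\<lambda>x. - (c * (w x)\<^sup>2)"])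
         (auto intro!: derivative_eq_intros dP simp: that cpos less_imp_le)
    then show ?thesis using P0 by simp
  qed
  have ynn: "y t \<ge> 0" if "t \<ge> 0" for t
    using Pnn[OF that] by (simp add: P_def zero_le_mult_iff)
  define M where "M t = exp (- ((n - 1) * t)) * w t" for t
  have dM: "(M has_real_derivative - (exp (- ((n - 1) * t)) * y t)) (at t within {0..})" if "t \<ge> 0" for t
  proof -
    have "(M has_real_derivative exp (- ((n - 1) * t)) * (- ((n - 1) * 1)) * w t + exp (- ((n - 1) * t)) * w' t) (at t within {0..})"
      unfolding M_def
      by (auto intro!: derivative_eq_intros hw' that)
    then show ?thesis by (simp add: y_def algebra_simps)
  qed
  have Mdec: "M t \<le> M s" if "0 \<le> s" "s \<le> t" for s t
    by (rule antimono_deriv[OF dM _ that]) (auto simp: ynn)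
  have Mlim: "(M \<longlongrightarrow> 0) at_top"
  proof -
    have "((\<lambda>t. exp (- ((n - 1) * t))) \<longlongrightarrow> 0) at_top"
      using filterlim_compose[OF exp_neg_lim filterlim_tendsto_pos_mult_at_top[OF tendsto_const _ filterlim_ident, of "n - 1"]] n4
      by (simp add: o_def)
    then show ?thesis unfolding M_def using tendsto_mult[OF _ hlim] by fastforce
  qed
  have Mnn: "M s \<ge> 0" if "s \<ge> 0" for s
  proof (rule tendsto_le[OF trivial_limit_at_top_linorder tendsto_const Mlim])
    show "\<forall>\<^sub>F x in at_top. M x \<le> M s"
      using eventually_ge_at_top[of s] by eventually_elim (use that Mdec in auto)
  qed
  have wnn: "w t \<ge> 0" if "t \<ge> 0" for t
    using Mnn[OF that] by (simp add: M_def zero_le_mult_iff)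
  obtain B where B: "\<And>t. t \<ge> 0 \<Longrightarrow> \<bar>w t\<bar> \<le> B"
  proof -
    obtain T where T: "\<And>t. t \<ge> T \<Longrightarrow> \<bar>w t\<bar> < 1"
      using hlim[unfolded tendsto_iff, rule_format, of 1] by (auto simp: eventually_at_top_linorder dist_real_def)
    have "continuous_on {0..T} w"
      by (rule continuous_on_subset[of "{0..}"])
         (auto intro!: DERIV_continuous_on hw')
    then have "bounded (w ` {0..T})" by (intro compact_imp_bounded compact_continuous_image) auto
    then obtain B0 where B0': "\<forall>t\<in>{0..T}. \<bar>w t\<bar> \<le> B0"
      by (auto simp: bounded_iff)
    then have B0: "\<And>t. t \<in> {0..T} \<Longrightarrow> \<bar>w t\<bar> \<le> B0" by blast
    show ?thesis
    proof (rule that[of "max B0 1"])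
      fix t :: real assume "t \<ge> 0"
      then show "\<bar>w t\<bar> \<le> max B0 1" using B0[of t] T[of t] by (cases "t \<le> T") auto
    qed
  qed
  have Pbd: "P t \<le> c * B\<^sup>2 * t" if "t \<ge> 0" for t
  proof -
    have "(\<lambda>x. P x - c * B\<^sup>2 * x) t \<le> (\<lambda>x. P x - c * B\<^sup>2 * x) 0"
    proof (rule antimono_deriv[where f = "\<lambda>x. P x - c * B\<^sup>2 * x" and f' = "\<lambda>x. c * (w x)\<^sup>2 - c * B\<^sup>2"])
      fix x :: real assume x: "x \<ge> 0"
      show "((\<lambda>x. P x - c * B\<^sup>2 * x) has_real_derivative c * (w x)\<^sup>2 - c * B\<^sup>2) (at x within {0..})"
        by (auto intro!: derivative_eq_intros dP x)
      have "(w x)\<^sup>2 \<le> B\<^sup>2" using B[OF x] by (metis abs_le_square_iff abs_of_nonneg abs_ge_zero order_trans)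
      then show "c * (w x)\<^sup>2 - c * B\<^sup>2 \<le> 0" using cpos by (simp add: mult_left_mono)
    qed (use that in auto)
    then show ?thesis using P0 by simp
  qed
  define W where "W t = exp (- t) * w t" for t
  define J where "J t = exp (- t) * y t / c" for t
  have dW: "(W has_real_derivative (n - 2) * W t - c * J t) (at t within {0..})" if "t \<ge> 0" for t
  proof -
    have "(W has_real_derivative exp (- t) * (- 1) * w t + exp (- t) * w' t) (at t within {0..})"
      unfolding W_def by (auto intro!: derivative_eq_intros hw' that)
    moreover have "(n - 2) * W t - c * J t = exp (- t) * (- 1) * w t + exp (- t) * w' t"
      using cpos by (simp add: W_def J_def y_def field_simps)
    ultimately show ?thesis by simp
  qed
  have dJ: "(J has_real_derivative (W t)\<^sup>2 - 2 * J t) (at t within {0..})" if "t \<ge> 0" for t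
  proof -
    have "(J has_real_derivative (exp (- t) * (- 1) * y t + exp (- t) * ((n - 1) * w' t - w'' t)) / c) (at t within {0..})"
      unfolding J_def y_def using cpos by (auto intro!: derivative_eq_intros hw' hw'' that)
    moreover have "(exp (- t) * (- 1) * y t + exp (- t) * ((n - 1) * w' t - w'' t)) / c = (W t)\<^sup>2 - 2 * J t"
      using heq'[OF that] cpos
      by (simp add: W_def J_def y_def field_simps power2_eq_square exp_minus)
    ultimately show ?thesis by simp
  qed
  define F where "F a b = n / 2 * a * b - c / 2 * b\<^sup>2 - a ^ 3 / 3" for a b :: real
  define Phi where "Phi t = exp (- (k * t)) * F (W t) (J t)" for t
  have dPhi: "(Phi has_real_derivative - (k / 6) * exp (- (k * t)) * (W t) ^ 3) (at t within {0..})" if "t \<ge> 0" for t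
  proof -
    have "(Phi has_real_derivative exp (- (k * t)) * (- (k * 1)) * F (W t) (J t) +
       exp (- (k * t)) * (n / 2 * ((n - 2) * W t - c * J t) * J t + n / 2 * W t * ((W t)\<^sup>2 - 2 * J t)
        - c / 2 * (2 * J t * ((W t)\<^sup>2 - 2 * J t)) - (3 * (W t)\<^sup>2 * ((n - 2) * W t - c * J t)) / 3)) (at t within {0..})"
      unfolding Phi_def F_def
      by (auto intro!: derivative_eq_intros dW dJ that simp: power2_eq_square)
    moreover have "exp (- (k * t)) * (- (k * 1)) * F (W t) (J t) +
       exp (- (k * t)) * (n / 2 * ((n - 2) * W t - c * J t) * J t + n / 2 * W t * ((W t)\<^sup>2 - 2 * J t)
        - c / 2 * (2 * J t * ((W t)\<^sup>2 - 2 * J t)) - (3 * (W t)\<^sup>2 * ((n - 2) * W t - c * J t)) / 3)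
       = - (k / 6) * exp (- (k * t)) * (W t) ^ 3"
    proof -
      have poly: "(- (n - 4)) * (n / 2 * a * b - (n-1)/2 / 2 * b\<^sup>2 - a ^ 3 / 3) +
       (n / 2 * ((n - 2) * a - (n-1)/2 * b) * b + n / 2 * a * (a\<^sup>2 - 2 * b)
        - (n-1)/2 / 2 * (2 * b * (a\<^sup>2 - 2 * b)) - (3 * a\<^sup>2 * ((n - 2) * a - (n-1)/2 * b)) / 3)
       = - ((n-4) / 6) * (a::real) ^ 3" for a b
        by (simp add: field_simps power2_eq_square power3_eq_cube)
      have "exp (- (k * t)) * ((- (n - 4)) * F (W t) (J t) +
       (n / 2 * ((n - 2) * W t - c * J t) * J t + n / 2 * W t * ((W t)\<^sup>2 - 2 * J t)
        - c / 2 * (2 * J t * ((W t)\<^sup>2 - 2 * J t)) - (3 * (W t)\<^sup>2 * ((n - 2) * W t - c * J t)) / 3))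
        = exp (- (k * t)) * (- ((n-4) / 6) * (W t) ^ 3)"
        using poly[of "W t" "J t"] by (simp add: F_def c_def)
      then show ?thesis by (simp add: k_def algebra_simps)
    qed
    ultimately show ?thesis by simp
  qed
  have Phidec: "Phi t \<le> Phi 0" if "t \<ge> 0" for t
  proof (rule antimono_deriv[OF dPhi])
    fix x :: real assume "x \<ge> 0"
    then have "W x \<ge> 0" using wnn by (simp add: W_def)
    then show "- (k / 6) * exp (- (k * x)) * (W x) ^ 3 \<le> 0" using k0 by simp
  qed (use that in auto)
  have Wlim: "(W \<longlongrightarrow> 0) at_top"
    unfolding W_def using tendsto_mult[OF exp_neg_lim hlim] by simp
  have Jlim: "(J \<longlongrightarrow> 0) at_top"
  proof (rule tendsto_sandwich[of "\<lambda>_. 0" _ _ "\<lambda>t. B\<^sup>2 * exp (- t)"])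
    show "\<forall>\<^sub>F t in at_top. 0 \<le> J t"
      using eventually_ge_at_top[of 0] by eventually_elim (use ynn cpos in \<open>auto simp: J_def\<close>)
    show "\<forall>\<^sub>F t in at_top. J t \<le> B\<^sup>2 * exp (- t)"
      using eventually_ge_at_top[of 0]
    proof eventually_elim
      case (elim t)
      have "J t = exp (- t) * exp (- t) * P t / c"
        by (simp add: J_def P_def exp_minus)
      also have "\<dots> \<le> exp (- t) * exp (- t) * (c * B\<^sup>2 * t) / c"
        using Pbd[OF elim] cpos by (intro divide_right_mono mult_left_mono) auto
      also have "\<dots> = B\<^sup>2 * exp (- t) * (t * exp (- t))" using cpos by simp
      also have "\<dots> \<le> B\<^sup>2 * exp (- t) * 1"
      proof (intro mult_left_mono)
        have "t \<le> exp t" using exp_ge_add_one_self[of t] by linarith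
        then show "t * exp (- t) \<le> 1" by (simp add: exp_minus field_simps)
      qed auto
      finally show ?case by simp
    qed
    show "((\<lambda>t. B\<^sup>2 * exp (- t)) \<longlongrightarrow> 0) at_top"
      using tendsto_mult[OF tendsto_const exp_neg_lim, of "B\<^sup>2"] by simp
  qed auto
  have Flim: "((\<lambda>t. F (W t) (J t)) \<longlongrightarrow> 0) at_top"
    unfolding F_def using Wlim Jlim by (auto intro!: tendsto_eq_intros)
  have Philim: "(Phi \<longlongrightarrow> 0) at_top"
  proof (rule tendsto_sandwich[of "\<lambda>t. - \<bar>F (W t) (J t)\<bar>" _ _ "\<lambda>t. \<bar>F (W t) (J t)\<bar>"])
    have Hab: "\<bar>Phi t\<bar> \<le> \<bar>F (W t) (J t)\<bar>" if "t \<ge> 0" for t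
    proof -
      have "exp (- (k * t)) \<le> 1" using k0 that by simp
      then show ?thesis by (simp add: Phi_def abs_mult mult_left_le_one_le)
    qed
    have H: "- \<bar>F (W t) (J t)\<bar> \<le> Phi t \<and> Phi t \<le> \<bar>F (W t) (J t)\<bar>" if "t \<ge> 0" for t
      using Hab[OF that] unfolding abs_le_iff by linarith
    show "\<forall>\<^sub>F t in at_top. - \<bar>F (W t) (J t)\<bar> \<le> Phi t"
      using eventually_ge_at_top[of 0] by eventually_elim (use H in blast)
    show "\<forall>\<^sub>F t in at_top. Phi t \<le> \<bar>F (W t) (J t)\<bar>"
      using eventually_ge_at_top[of 0] by eventually_elim (use H in blast)
    show "((\<lambda>t. - \<bar>F (W t) (J t)\<bar>) \<longlongrightarrow> 0) at_top" "((\<lambda>t. \<bar>F (W t) (J t)\<bar>) \<longlongrightarrow> 0) at_top"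
      using tendsto_minus[OF tendsto_rabs_zero[OF Flim]] tendsto_rabs_zero[OF Flim] by auto
  qed
  have "0 \<le> Phi 0"
  proof (rule tendsto_le[OF trivial_limit_at_top_linorder tendsto_const Philim])
    show "\<forall>\<^sub>F x in at_top. Phi x \<le> Phi 0"
      using eventually_ge_at_top[of 0] by eventually_elim (use Phidec in auto)
  qed
  moreover have "Phi 0 = - ((w 0) ^ 3) / 3"
    using hbc by (simp add: Phi_def F_def W_def J_def y_def n_def)
  ultimately have "(w 0) ^ 3 \<le> 0" by simp
  have w00: "w 0 = 0"
  proof (rule ccontr)
    assume "w 0 \<noteq> 0"
    then have "w 0 > 0" using wnn[of 0] by simp
    then have "(w 0) ^ 3 > 0" by simp
    then show False using \<open>(w 0) ^ 3 \<le> 0\<close> by simp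
  qed
  show ?thesis
  proof (intro allI impI)
    fix t :: real assume "t \<ge> 0"
    have "M t \<le> M 0" using Mdec[of 0 t] \<open>t \<ge> 0\<close> by simp
    then have "M t = 0" using Mnn[OF \<open>t \<ge> 0\<close>] w00 by (simp add: M_def)
    then show "w t = 0" by (simp add: M_def)
  qed
qed

end
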